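(* Let $n\ge 2$. With respect to the basis $(X,Y_1,\dots,Y_{n-1},Z_1,\dots,Z_{n-1},W)$ of $\mathfrak{ch}^n$ (block decomposition of sizes $1,\ 2n-2,\ 1$), the automorphism group of the Lie algebra $\mathfrak{ch}^n$ is $$\mathrm{Aut}(\mathfrak{ch}^n)=\left\{\begin{pmatrix}1&0&0\\ u&M&0\\ a&v^T&\lambda\end{pmatrix}\ :\ M\in GL(2n-2,\mathbb R),\ M^TJ_{n-1}M=\lambda J_{n-1},\ v\in\mathbb R^{2n-2},\ a,\lambda\in\mathbb R,\ \lambda\neq 0,\ u=\tfrac{1}{2\lambda}MJ_{n-1}v\right\}.$$
   Context: $\mathfrak{ch}^n$ is the $2n$-dimensional real Lie algebra with basis $X,Y_1,\dots,Y_{n-1},Z_1,\dots,Z_{n-1},W$ whose only nonzero brackets (up to antisymmetry) are $[X,Y_i]=\tfrac12 Y_i$, $[X,Z_i]=\tfrac12 Z_i$, $[X,W]=W$, $[Z_j,Y_i]=\delta_{ij}W$ for $i,j\in\{1,\dots,n-1\}$ (it is the Lie algebra of the solvable group $\mathbb R\ltimes H_{2n-1}$ acting simply transitively on complex hyperbolic space $\mathbb{CH}^n$). Linear maps are represented by matrices in this ordered basis (the $k$-th column is the coordinate vector of the image of the $k$-th basis vector). $J_{m}=\begin{pmatrix}0&I_m\\-I_m&0\end{pmatrix}$ with $I_m$ the $m\times m$ identity matrix. *)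

theory Defs
  imports "Jordan_Normal_Form.Matrix"
begin

text \<open>Basis of ch^n indexed by 0..2n-1:
  index 0 = X, index i (1 <= i <= n-1) = Y_i, index (n-1)+i (1 <= i <= n-1) = Z_i,
  index 2n-1 = W.\<close>

text \<open>Structure constants: ch_sc n j k l is the coefficient of basis vector l in [e_j, e_k].\<close>
definition ch_sc :: "nat \<Rightarrow> nat \<Rightarrow> nat \<Rightarrow> nat \<Rightarrow> real" where
  "ch_sc n j k l =
    (if j = 0 \<and> 1 \<le> k \<and> k \<le> 2*n-2 \<and> l = k then 1/2
     else if k = 0 \<and> 1 \<le> j \<and> j \<le> 2*n-2 \<and> l = j then -1/2
     else if j = 0 \<and> k = 2*n-1 \<and> l = 2*n-1 then 1
     else if k = 0 \<and> j = 2*n-1 \<and> l = 2*n-1 then -1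
     else if n \<le> j \<and> j \<le> 2*n-2 \<and> k = j - (n-1) \<and> l = 2*n-1 then 1
     else if n \<le> k \<and> k \<le> 2*n-2 \<and> j = k - (n-1) \<and> l = 2*n-1 then -1
     else 0)"

definition ch_bracket :: "nat \<Rightarrow> real vec \<Rightarrow> real vec \<Rightarrow> real vec" where
  "ch_bracket n x y = vec (2*n) (\<lambda>l. \<Sum>j<2*n. \<Sum>k<2*n. x $ j * y $ k * ch_sc n j k l)"

definition ch_Aut :: "nat \<Rightarrow> real mat set" where
  "ch_Aut n = {A. A \<in> carrier_mat (2*n) (2*n) \<and> invertible_mat A \<and>
      (\<forall>x \<in> carrier_vec (2*n). \<forall>y \<in> carrier_vec (2*n).
         A *\<^sub>v ch_bracket n x y = ch_bracket n (A *\<^sub>v x) (A *\<^sub>v y))}"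

definition Jm :: "nat \<Rightarrow> real mat" where
  "Jm m = four_block_mat (0\<^sub>m m m) (1\<^sub>m m) (- (1\<^sub>m m)) (0\<^sub>m m m)"

text \<open>The 3x3 block matrix with blocks of sizes 1, 2n-2, 1:
  [[1,0,0],[u,M,0],[a,v^T,lambda]].\<close>
definition ch_block :: "nat \<Rightarrow> real vec \<Rightarrow> real mat \<Rightarrow> real \<Rightarrow> real vec \<Rightarrow> real \<Rightarrow> real mat" where
  "ch_block n u M a v lam = mat (2*n) (2*n) (\<lambda>(i,j).
     if i = 0 then (if j = 0 then 1 else 0)
     else if i \<le> 2*n-2 then
       (if j = 0 then u $ (i-1) else if j \<le> 2*n-2 then M $$ (i-1, j-1) else 0)
     else (if j = 0 then a else if j \<le> 2*n-2 then v $ (j-1) else lam))"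

end

theory Submission imports Defs "Jordan_Normal_Form.Determinant" begin

lemma sc_simp: "ch_sc (Suc m) j k l =
    (if j = 0 \<and> 1 \<le> k \<and> k \<le> 2*m \<and> l = k then 1/2
     else if k = 0 \<and> 1 \<le> j \<and> j \<le> 2*m \<and> l = j then -1/2
     else if j = 0 \<and> k = 2*m+1 \<and> l = 2*m+1 then 1
     else if k = 0 \<and> j = 2*m+1 \<and> l = 2*m+1 then -1
     else if m < j \<and> j \<le> 2*m \<and> k = j - m \<and> l = 2*m+1 then 1
     else if m < k \<and> k \<le> 2*m \<and> j = k - m \<and> l = 2*m+1 then -1
     else 0)"
  unfolding ch_sc_def by (simp add: Suc_le_eq)

lemma sc_W: "ch_sc (Suc m) j k (2*m+1) =
  (if j = 0 \<and> k = 2*m+1 then 1 else 0) - (if j = 2*m+1 \<and> k = 0 then 1 else 0)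
  + (if m < j \<and> j \<le> 2*m \<and> k = j - m then 1 else 0) - (if m < k \<and> k \<le> 2*m \<and> j = k - m then 1 else 0)"
  unfolding sc_simp by auto

lemma sc_decomp: "ch_sc (Suc m) j k l =
  (if l = k then (if j = 0 \<and> 1 \<le> k \<and> k \<le> 2*m then 1/2 else 0) else 0)
  + (if l = j then (if k = 0 \<and> 1 \<le> j \<and> j \<le> 2*m then -1/2 else 0) else 0)
  + (if l = 2*m+1 then ch_sc (Suc m) j k (2*m+1) else 0)"
proof (cases "l = 2*m+1")
  case True
  then show ?thesis unfolding sc_simp by auto
next
  case False
  then show ?thesis unfolding sc_simp by auto
qed


lemma sum_delta_lt: "(\<Sum>l<(N::nat). (if l = c then f l else 0)) = (if c < N then f c else (0::real))"
  by (simp add: sum.delta)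

lemma lhs_sum: assumes "j < 2*m+2" "k < 2*m+2"
  fixes h :: "nat \<Rightarrow> real"
  shows "(\<Sum>l<2*m+2. h l * ch_sc (Suc m) j k l) =
    (if j = 0 \<and> 1 \<le> k \<and> k \<le> 2*m then h k / 2 else 0)
    + (if k = 0 \<and> 1 \<le> j \<and> j \<le> 2*m then - h j / 2 else 0)
    + h (2*m+1) * ch_sc (Suc m) j k (2*m+1)"
proof -
  have "(\<Sum>l<2*m+2. h l * ch_sc (Suc m) j k l) = (\<Sum>l<2*m+2.
     (if l = k then (if j = 0 \<and> 1 \<le> k \<and> k \<le> 2*m then h k / 2 else 0) else 0)
    + (if l = j then (if k = 0 \<and> 1 \<le> j \<and> j \<le> 2*m then - h j / 2 else 0) else 0)
    + (if l = 2*m+1 then h (2*m+1) * ch_sc (Suc m) j k (2*m+1) else 0))"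
    by (rule sum.cong[OF refl], subst sc_decomp, auto)
  also have "\<dots> = (\<Sum>l<2*m+2. (if l = k then (if j = 0 \<and> 1 \<le> k \<and> k \<le> 2*m then h k / 2 else 0) else 0))
     + (\<Sum>l<2*m+2. (if l = j then (if k = 0 \<and> 1 \<le> j \<and> j \<le> 2*m then - h j / 2 else 0) else 0))
     + (\<Sum>l<2*m+2. (if l = 2*m+1 then h (2*m+1) * ch_sc (Suc m) j k (2*m+1) else 0))"
    by (simp add: sum.distrib)
  also have "\<dots> = (if j = 0 \<and> 1 \<le> k \<and> k \<le> 2*m then h k / 2 else 0)
    + (if k = 0 \<and> 1 \<le> j \<and> j \<le> 2*m then - h j / 2 else 0)
    + h (2*m+1) * ch_sc (Suc m) j k (2*m+1)"
    unfolding sum_delta_lt using assms by simp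
  finally show ?thesis .
qed

lemma dsum_delta: "(\<Sum>p<(N::nat). \<Sum>q<N. f p * g q * (if p = a \<and> q = b then c else 0)) =
   (if a < N \<and> b < N then f a * g b * c else (0::real))"
proof -
  have e: "\<And>p q. f p * g q * (if p = a \<and> q = b then c else 0) = (if q = b then (if p = a then f a * g b * c else 0) else 0)"
    by simp
  show ?thesis by (simp only: e) (cases "b < N"; simp add: sum.delta)
qed

lemma symp_sum: fixes f g :: "nat \<Rightarrow> real" shows "(\<Sum>p<2*m+2. \<Sum>q<2*m+2. f p * g q * (if m < p \<and> p \<le> 2*m \<and> q = p - m then 1 else 0)) =
   (\<Sum>i<m. f (Suc m + i) * g (Suc i))"
proof -
  have "(\<Sum>p<2*m+2. \<Sum>q<2*m+2. f p * g q * (if m < p \<and> p \<le> 2*m \<and> q = p - m then 1 else 0)) =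
        (\<Sum>p<2*m+2. if m < p \<and> p \<le> 2*m then f p * g (p - m) else 0)"
  proof (rule sum.cong[OF refl])
    fix p assume p: "p \<in> {..<2*m+2}"
    have "(\<Sum>q<2*m+2. f p * g q * (if m < p \<and> p \<le> 2*m \<and> q = p - m then 1 else 0))
       = (\<Sum>q<2*m+2. if q = p - m then (if m < p \<and> p \<le> 2*m then f p * g q else 0) else 0)"
      by (rule sum.cong) auto
    also have "\<dots> = (if m < p \<and> p \<le> 2*m then f p * g (p - m) else 0)"
      using p by (auto simp: sum.delta)
    finally show "(\<Sum>q<2*m+2. f p * g q * (if m < p \<and> p \<le> 2*m \<and> q = p - m then 1 else 0)) =
      (if m < p \<and> p \<le> 2*m then f p * g (p - m) else 0)" .
  qed
  also have "\<dots> = (\<Sum>p\<in>{..<2*m+2} \<inter> {p. m < p \<and> p \<le> 2*m}. f p * g (p - m))"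
    by (simp add: sum.inter_restrict)
  also have "{..<2*m+2} \<inter> {p. m < p \<and> p \<le> 2*m} = {0 + Suc m..<m + Suc m}" by auto
  also have "(\<Sum>p\<in>{0 + Suc m..<m + Suc m}. f p * g (p - m)) = (\<Sum>i\<in>{0..<m}. f (i + Suc m) * g (i + Suc m - m))"
    by (rule sum.shift_bounds_nat_ivl)
  also have "\<dots> = (\<Sum>i<m. f (Suc m + i) * g (Suc i))"
    by (simp add: atLeast0LessThan add.commute)
  finally show ?thesis .
qed

lemma symp_sum2: fixes f g :: "nat \<Rightarrow> real" shows "(\<Sum>p<2*m+2. \<Sum>q<2*m+2. f p * g q * (if m < q \<and> q \<le> 2*m \<and> p = q - m then 1 else 0)) =
   (\<Sum>i<m. f (Suc i) * g (Suc m + i))"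
proof -
  have "(\<Sum>p<2*m+2. \<Sum>q<2*m+2. f p * g q * (if m < q \<and> q \<le> 2*m \<and> p = q - m then 1 else 0)) =
    (\<Sum>q<2*m+2. \<Sum>p<2*m+2. g q * f p * (if m < q \<and> q \<le> 2*m \<and> p = q - m then 1 else 0))"
    by (subst sum.swap) (simp add: mult_ac)
  also have "\<dots> = (\<Sum>i<m. g (Suc m + i) * f (Suc i))" by (rule symp_sum)
  finally show ?thesis by (simp add: mult_ac)
qed

definition brc :: "nat \<Rightarrow> (nat \<Rightarrow> real) \<Rightarrow> (nat \<Rightarrow> real) \<Rightarrow> nat \<Rightarrow> real" where
  "brc m f g l = (if l = 0 then 0 else if l \<le> 2*m then (f 0 * g l - f l * g 0)/2
     else f 0 * g (2*m+1) - f (2*m+1) * g 0 + (\<Sum>i<m. f (Suc m + i) * g (Suc i) - f (Suc i) * g (Suc m + i)))"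

lemma rhs_sum: fixes f g :: "nat \<Rightarrow> real" assumes l: "l < 2*m+2"
  shows "(\<Sum>p<2*m+2. \<Sum>q<2*m+2. f p * g q * ch_sc (Suc m) p q l) = brc m f g l"
proof -
  consider "l = 0" | "1 \<le> l \<and> l \<le> 2*m" | "l = 2*m+1" using l by linarith
  then show ?thesis
  proof cases
    case 1
    have "\<And>p q. ch_sc (Suc m) p q l = 0" using 1 by (simp add: sc_simp)
    then show ?thesis unfolding brc_def using 1 by simp
  next
    case 2
    have "(\<Sum>p<2*m+2. \<Sum>q<2*m+2. f p * g q * ch_sc (Suc m) p q l) =
      (\<Sum>p<2*m+2. \<Sum>q<2*m+2. f p * g q * (if p = 0 \<and> q = l then 1/2 else 0)
        + f p * g q * (if p = l \<and> q = 0 then -1/2 else 0))"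
      using 2 by (intro sum.cong refl) (auto simp: sc_simp)
    also have "\<dots> = (f 0 * g l - f l * g 0)/2"
      using 2 by (simp only: sum.distrib dsum_delta) simp
    finally show ?thesis using 2 unfolding brc_def by simp
  next
    case 3
    have "(\<Sum>p<2*m+2. \<Sum>q<2*m+2. f p * g q * ch_sc (Suc m) p q l) =
      (\<Sum>p<2*m+2. \<Sum>q<2*m+2. f p * g q * (if p = 0 \<and> q = 2*m+1 then 1 else 0)
        - f p * g q * (if p = 2*m+1 \<and> q = 0 then 1 else 0)
        + f p * g q * (if m < p \<and> p \<le> 2*m \<and> q = p - m then 1 else 0)
        - f p * g q * (if m < q \<and> q \<le> 2*m \<and> p = q - m then 1 else 0))"
      unfolding 3 by (intro sum.cong refl) (simp only: sc_W right_diff_distrib distrib_left)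
    also have "\<dots> = f 0 * g (2*m+1) - f (2*m+1) * g 0 + (\<Sum>i<m. f (Suc m + i) * g (Suc i))
       - (\<Sum>i<m. f (Suc i) * g (Suc m + i))"
      by (simp only: sum.distrib sum_subtractf dsum_delta symp_sum symp_sum2) simp
    finally show ?thesis using 3 unfolding brc_def by (simp add: sum_subtractf)
  qed
qed


lemma swap3: "(\<Sum>i\<in>I. \<Sum>j\<in>J. \<Sum>k\<in>K. f i j k) = (\<Sum>j\<in>J. \<Sum>k\<in>K. \<Sum>i\<in>I. (f i j k :: real))"
proof -
  have "(\<Sum>i\<in>I. \<Sum>j\<in>J. \<Sum>k\<in>K. f i j k) = (\<Sum>j\<in>J. \<Sum>i\<in>I. \<Sum>k\<in>K. f i j k)" by (rule sum.swap)
  also have "\<dots> = (\<Sum>j\<in>J. \<Sum>k\<in>K. \<Sum>i\<in>I. f i j k)" by (rule sum.cong[OF refl], rule sum.swap)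
  finally show ?thesis .
qed

lemma swap4: "(\<Sum>p\<in>P. \<Sum>q\<in>Q. \<Sum>j\<in>J. \<Sum>k\<in>K. f p q j k) = (\<Sum>j\<in>J. \<Sum>k\<in>K. \<Sum>p\<in>P. \<Sum>q\<in>Q. (f p q j k :: real))"
proof -
  have "(\<Sum>p\<in>P. \<Sum>q\<in>Q. \<Sum>j\<in>J. \<Sum>k\<in>K. f p q j k) = (\<Sum>p\<in>P. \<Sum>j\<in>J. \<Sum>k\<in>K. \<Sum>q\<in>Q. f p q j k)"
    by (rule sum.cong[OF refl], rule swap3)
  also have "\<dots> = (\<Sum>j\<in>J. \<Sum>k\<in>K. \<Sum>p\<in>P. \<Sum>q\<in>Q. f p q j k)" by (rule swap3)
  finally show ?thesis .
qed

lemma N_eq: "2 * Suc m = 2*m+2" by simp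

lemma br_index: "l < 2*m+2 \<Longrightarrow> ch_bracket (Suc m) x y $ l = (\<Sum>j<2*m+2. \<Sum>k<2*m+2. x $ j * y $ k * ch_sc (Suc m) j k l)"
  unfolding ch_bracket_def N_eq by simp

lemma br_dim: "dim_vec (ch_bracket (Suc m) x y) = 2*m+2"
  unfolding ch_bracket_def N_eq by simp

lemma br_carrier: "ch_bracket (Suc m) x y \<in> carrier_vec (2*m+2)"
  unfolding carrier_vec_def using br_dim by blast

lemma mv_index: "A \<in> carrier_mat N N \<Longrightarrow> w \<in> carrier_vec N \<Longrightarrow> l < N \<Longrightarrow> (A *\<^sub>v w) $ l = (\<Sum>i<N. A $$ (l,i) * w $ i)"
  by (simp add: scalar_prod_def atLeast0LessThan)

lemma unit_br: "l < 2*m+2 \<Longrightarrow> j < 2*m+2 \<Longrightarrow> k < 2*m+2 \<Longrightarrow>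
   ch_bracket (Suc m) (unit_vec (2*m+2) j) (unit_vec (2*m+2) k) $ l = ch_sc (Suc m) j k l"
proof -
  assume l: "l < 2*m+2" and j: "j < 2*m+2" and k: "k < 2*m+2"
  have "(\<Sum>p<2*m+2. \<Sum>q<2*m+2. unit_vec (2*m+2) j $ p * unit_vec (2*m+2) k $ q * ch_sc (Suc m) p q l)
     = (\<Sum>p<2*m+2. \<Sum>q<2*m+2. (if q = k then (if p = j then ch_sc (Suc m) j k l else 0) else 0))"
    using j k by (intro sum.cong refl) auto
  then show ?thesis unfolding br_index[OF l] using j k by (simp add: sum.delta)
qed

definition Eq :: "nat \<Rightarrow> real mat \<Rightarrow> nat \<Rightarrow> nat \<Rightarrow> nat \<Rightarrow> bool" where
  "Eq m A j k l \<longleftrightarrow> (\<Sum>i<2*m+2. A $$ (l,i) * ch_sc (Suc m) j k i) =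
     (\<Sum>p<2*m+2. \<Sum>q<2*m+2. A $$ (p,j) * A $$ (q,k) * ch_sc (Suc m) p q l)"

lemma aut_iff: assumes A: "A \<in> carrier_mat (2*m+2) (2*m+2)"
  shows "(\<forall>x\<in>carrier_vec (2*m+2). \<forall>y\<in>carrier_vec (2*m+2).
     A *\<^sub>v ch_bracket (Suc m) x y = ch_bracket (Suc m) (A *\<^sub>v x) (A *\<^sub>v y))
   \<longleftrightarrow> (\<forall>j<2*m+2. \<forall>k<2*m+2. \<forall>l<2*m+2. Eq m A j k l)"
proof
  assume H: "\<forall>x\<in>carrier_vec (2*m+2). \<forall>y\<in>carrier_vec (2*m+2).
     A *\<^sub>v ch_bracket (Suc m) x y = ch_bracket (Suc m) (A *\<^sub>v x) (A *\<^sub>v y)"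
  show "\<forall>j<2*m+2. \<forall>k<2*m+2. \<forall>l<2*m+2. Eq m A j k l"
  proof (intro allI impI)
    fix j k l assume j: "j < 2*m+2" and k: "k < 2*m+2" and l: "l < 2*m+2"
    let ?x = "unit_vec (2*m+2) j" and ?y = "unit_vec (2*m+2) k"
    have H1: "A *\<^sub>v ch_bracket (Suc m) ?x ?y = ch_bracket (Suc m) (A *\<^sub>v ?x) (A *\<^sub>v ?y)"
      by (rule H[rule_format]) (rule unit_vec_carrier)+
    have c1: "(A *\<^sub>v ch_bracket (Suc m) ?x ?y) $ l = (\<Sum>i<2*m+2. A $$ (l,i) * ch_sc (Suc m) j k i)"
    proof -
      have "(A *\<^sub>v ch_bracket (Suc m) ?x ?y) $ l = (\<Sum>i<2*m+2. A $$ (l,i) * ch_bracket (Suc m) ?x ?y $ i)"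
        using mv_index[OF A br_carrier l] .
      also have "\<dots> = (\<Sum>i<2*m+2. A $$ (l,i) * ch_sc (Suc m) j k i)"
        by (rule sum.cong[OF refl]) (use j k unit_br in auto)
      finally show ?thesis .
    qed
    have ucol: "\<And>p c. p < 2*m+2 \<Longrightarrow> c < 2*m+2 \<Longrightarrow> (A *\<^sub>v unit_vec (2*m+2) c) $ p = A $$ (p, c)"
    proof -
      fix p c assume p: "p < 2*m+2" and c: "c < 2*m+2"
      have "(A *\<^sub>v unit_vec (2*m+2) c) $ p = (\<Sum>i<2*m+2. A $$ (p,i) * unit_vec (2*m+2) c $ i)"
        by (rule mv_index[OF A _ p]) simp
      also have "\<dots> = (\<Sum>i<2*m+2. if i = c then A $$ (p,c) else 0)"
        using c by (intro sum.cong refl) auto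
      also have "\<dots> = A $$ (p,c)" using c by (simp add: sum.delta)
      finally show "(A *\<^sub>v unit_vec (2*m+2) c) $ p = A $$ (p, c)" .
    qed
    have c2: "ch_bracket (Suc m) (A *\<^sub>v ?x) (A *\<^sub>v ?y) $ l = (\<Sum>p<2*m+2. \<Sum>q<2*m+2. A $$ (p,j) * A $$ (q,k) * ch_sc (Suc m) p q l)"
      unfolding br_index[OF l] by (rule sum.cong[OF refl], rule sum.cong[OF refl]) (use j k ucol in auto)
    show "Eq m A j k l" unfolding Eq_def using H1 c1 c2 by simp
  qed
next
  assume H: "\<forall>j<2*m+2. \<forall>k<2*m+2. \<forall>l<2*m+2. Eq m A j k l"
  show "\<forall>x\<in>carrier_vec (2*m+2). \<forall>y\<in>carrier_vec (2*m+2).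
     A *\<^sub>v ch_bracket (Suc m) x y = ch_bracket (Suc m) (A *\<^sub>v x) (A *\<^sub>v y)"
  proof (intro ballI)
    fix x y :: "real vec" assume x: "x \<in> carrier_vec (2*m+2)" and y: "y \<in> carrier_vec (2*m+2)"
    have Ax: "A *\<^sub>v x \<in> carrier_vec (2*m+2)" using A x by simp
    have Ay: "A *\<^sub>v y \<in> carrier_vec (2*m+2)" using A y by simp
    show "A *\<^sub>v ch_bracket (Suc m) x y = ch_bracket (Suc m) (A *\<^sub>v x) (A *\<^sub>v y)"
    proof (rule eq_vecI)
      show "dim_vec (A *\<^sub>v ch_bracket (Suc m) x y) = dim_vec (ch_bracket (Suc m) (A *\<^sub>v x) (A *\<^sub>v y))"
        using A by (simp add: br_dim)
      fix l assume "l < dim_vec (ch_bracket (Suc m) (A *\<^sub>v x) (A *\<^sub>v y))"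
      then have l: "l < 2*m+2" by (simp add: br_dim)
      let ?N = "{..<2*m+2}"
      have "(A *\<^sub>v ch_bracket (Suc m) x y) $ l = (\<Sum>i\<in>?N. A $$ (l,i) * ch_bracket (Suc m) x y $ i)"
        using mv_index[OF A br_carrier l] .
      also have "\<dots> = (\<Sum>i\<in>?N. A $$ (l,i) * (\<Sum>j\<in>?N. \<Sum>k\<in>?N. x $ j * y $ k * ch_sc (Suc m) j k i))"
        by (rule sum.cong[OF refl]) (simp add: br_index)
      also have "\<dots> = (\<Sum>i\<in>?N. \<Sum>j\<in>?N. \<Sum>k\<in>?N. A $$ (l,i) * (x $ j * y $ k * ch_sc (Suc m) j k i))"
        by (simp only: sum_distrib_left)
      also have "\<dots> = (\<Sum>j\<in>?N. \<Sum>k\<in>?N. \<Sum>i\<in>?N. A $$ (l,i) * (x $ j * y $ k * ch_sc (Suc m) j k i))"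
        by (rule swap3)
      also have "\<dots> = (\<Sum>j\<in>?N. \<Sum>k\<in>?N. x $ j * y $ k * (\<Sum>i\<in>?N. A $$ (l,i) * ch_sc (Suc m) j k i))"
        by (rule sum.cong[OF refl], rule sum.cong[OF refl], simp only: sum_distrib_left, rule sum.cong[OF refl], simp only: mult_ac)
      also have "\<dots> = (\<Sum>j\<in>?N. \<Sum>k\<in>?N. x $ j * y $ k * (\<Sum>p\<in>?N. \<Sum>q\<in>?N. A $$ (p,j) * A $$ (q,k) * ch_sc (Suc m) p q l))"
        by (rule sum.cong[OF refl], rule sum.cong[OF refl]) (use H l in \<open>simp add: Eq_def\<close>)
      also have "\<dots> = (\<Sum>j\<in>?N. \<Sum>k\<in>?N. \<Sum>p\<in>?N. \<Sum>q\<in>?N. (A $$ (p,j) * x $ j) * (A $$ (q,k) * y $ k) * ch_sc (Suc m) p q l)"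
        by (rule sum.cong[OF refl], rule sum.cong[OF refl], simp only: sum_distrib_left, rule sum.cong[OF refl], rule sum.cong[OF refl], simp only: mult_ac)
      also have "\<dots> = (\<Sum>p\<in>?N. \<Sum>q\<in>?N. \<Sum>j\<in>?N. \<Sum>k\<in>?N. (A $$ (p,j) * x $ j) * (A $$ (q,k) * y $ k) * ch_sc (Suc m) p q l)"
        by (rule swap4[symmetric])
      also have "\<dots> = (\<Sum>p\<in>?N. \<Sum>q\<in>?N. (\<Sum>j\<in>?N. A $$ (p,j) * x $ j) * (\<Sum>k\<in>?N. A $$ (q,k) * y $ k) * ch_sc (Suc m) p q l)"
        by (rule sum.cong[OF refl], rule sum.cong[OF refl]) (subst sum_product, simp only: sum_distrib_right)
      also have "\<dots> = (\<Sum>p\<in>?N. \<Sum>q\<in>?N. (A *\<^sub>v x) $ p * (A *\<^sub>v y) $ q * ch_sc (Suc m) p q l)"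
        by (rule sum.cong[OF refl], rule sum.cong[OF refl]) (simp add: mv_index[OF A x] mv_index[OF A y])
      also have "\<dots> = ch_bracket (Suc m) (A *\<^sub>v x) (A *\<^sub>v y) $ l"
        by (simp add: br_index[OF l])
      finally show "(A *\<^sub>v ch_bracket (Suc m) x y) $ l = ch_bracket (Suc m) (A *\<^sub>v x) (A *\<^sub>v y) $ l" .
    qed
  qed
qed


lemma inv_mat_obtain: assumes "A \<in> carrier_mat N N" "invertible_mat A"
  shows "\<exists>B \<in> carrier_mat N N. A * B = 1\<^sub>m N \<and> B * A = 1\<^sub>m N"
proof -
  from assms(2) obtain B where AB: "A * B = 1\<^sub>m (dim_row A)" and BA: "B * A = 1\<^sub>m (dim_row B)"
    unfolding invertible_mat_def inverts_mat_def by blast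
  have c: "dim_col B = N" using arg_cong[OF AB, of dim_col] assms(1) by simp
  moreover have r: "dim_row B = N" using arg_cong[OF BA, of dim_col] assms(1) by simp
  ultimately have B: "B \<in> carrier_mat N N" by (intro carrier_matI)
  have "dim_row A = N" using assms(1) by (rule carrier_matD)
  then show ?thesis using AB BA B by auto
qed

lemma inv_mat_intro: assumes A: "A \<in> carrier_mat N N" and B: "B \<in> carrier_mat N N" and BA: "B * A = (1\<^sub>m N :: real mat)"
  shows "invertible_mat A"
proof -
  have "A * B = 1\<^sub>m N" by (rule mat_mult_left_right_inverse[OF B A BA])
  then show ?thesis using A B BA unfolding invertible_mat_def inverts_mat_def by auto
qed

lemma det_inv: assumes A: "A \<in> carrier_mat N N" and d: "det A \<noteq> (0::real)" shows "invertible_mat A"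
proof -
  have "A \<in> Units (ring_mat TYPE(real) N undefined)" by (rule det_non_zero_imp_unit[OF A d])
  then obtain B where "B \<in> carrier_mat N N" "B * A = 1\<^sub>m N" unfolding Units_def ring_mat_def by auto
  then show ?thesis using inv_mat_intro A by blast
qed

lemma J_carrier: "Jm m \<in> carrier_mat (2*m) (2*m)"
  unfolding Jm_def by (rule carrier_matI) (simp_all add: mult_2)

lemma J_idx: assumes i: "i < 2*m" and j: "j < 2*m"
  shows "Jm m $$ (i,j) = (if i < m \<and> j = i + m then 1 else if m \<le> i \<and> i = j + m then -1 else 0)"
proof -
  have e: "Jm m $$ (i,j) = (if i < m then if j < m then 0 else 1\<^sub>m m $$ (i, j - m)
      else if j < m then (- 1\<^sub>m m) $$ (i - m, j) else (0\<^sub>m m m :: real mat) $$ (i - m, j - m))"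
    unfolding Jm_def using i j by (subst index_mat_four_block(1)) simp_all
  show ?thesis
  proof (cases "i < m")
    case True
    then show ?thesis unfolding e using j by (cases "j < m") auto
  next
    case False
    then show ?thesis unfolding e using i j by (cases "j < m") auto
  qed
qed

lemma split2: fixes m :: nat shows "(\<Sum>i<2*m. f i) = (\<Sum>i<m. f i) + (\<Sum>i<m. (f (m+i) :: real))"
proof -
  have "(\<Sum>i<2*m. f i) = (\<Sum>i\<in>{0..<m}. f i) + (\<Sum>i\<in>{m..<m+m}. f i)"
    by (simp add: atLeast0LessThan[symmetric] sum.atLeastLessThan_concat mult_2)
  also have "(\<Sum>i\<in>{m..<m+m}. f i) = (\<Sum>i\<in>{0..<m}. f (i+m))"
    using sum.shift_bounds_nat_ivl[of f 0 m m] by simp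
  finally show ?thesis by (simp add: atLeast0LessThan add.commute)
qed

lemma Jmul: assumes i: "i < 2*m"
  shows "(\<Sum>r<2*m. Jm m $$ (i,r) * q r) = (if i < m then q (i+m) else - (q (i-m) :: real))"
proof -
  have "(\<Sum>r<2*m. Jm m $$ (i,r) * q r) = (\<Sum>r<2*m. (if r = i + m then (if i < m then q r else 0) else 0)
     + (if r = i - m then (if m \<le> i then - q r else 0) else 0))"
    using i by (intro sum.cong refl) (auto simp: J_idx)
  also have "\<dots> = (if i < m then q (i+m) else - q (i-m))"
    using i by (simp add: sum.distrib sum.delta, linarith)
  finally show ?thesis .
qed

lemma JJ: "Jm m * Jm m = - 1\<^sub>m (2*m)"
proof (rule eq_matI)
  fix i j assume "i < dim_row (- 1\<^sub>m (2*m) :: real mat)" "j < dim_col (- 1\<^sub>m (2*m) :: real mat)"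
  then have i: "i < 2*m" and j: "j < 2*m" by auto
  have "(Jm m * Jm m) $$ (i,j) = (\<Sum>r<2*m. Jm m $$ (i,r) * Jm m $$ (r,j))"
    using i j J_carrier[of m] by (simp add: scalar_prod_def atLeast0LessThan)
  also have "\<dots> = (if i < m then Jm m $$ (i+m, j) else - Jm m $$ (i - m, j))"
    by (rule Jmul[OF i])
  also have "\<dots> = (- 1\<^sub>m (2*m)) $$ (i,j)"
    using i j by (auto simp: J_idx)
  finally show "(Jm m * Jm m) $$ (i,j) = (- 1\<^sub>m (2*m)) $$ (i,j)" .
qed (use J_carrier[of m] in auto)

lemma Jt: "transpose_mat (Jm m) = - Jm m"
proof (rule eq_matI)
  fix i j assume "i < dim_row (- Jm m)" "j < dim_col (- Jm m)"
  then have i: "i < 2*m" and j: "j < 2*m" using J_carrier[of m] by auto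
  show "transpose_mat (Jm m) $$ (i, j) = (- Jm m) $$ (i, j)"
    using i j J_carrier[of m] by (auto simp: J_idx)
qed (use J_carrier[of m] in auto)

definition symp :: "nat \<Rightarrow> (nat \<Rightarrow> real) \<Rightarrow> (nat \<Rightarrow> real) \<Rightarrow> real" where
  "symp m p q = (\<Sum>i<m. p i * q (m+i) - p (m+i) * q i)"

lemma symp_J: "symp m p q = (\<Sum>i<2*m. p i * (\<Sum>r<2*m. Jm m $$ (i,r) * q r))"
proof -
  have "(\<Sum>i<2*m. p i * (\<Sum>r<2*m. Jm m $$ (i,r) * q r)) = (\<Sum>i<2*m. p i * (if i < m then q (i+m) else - q (i-m)))"
    by (intro sum.cong refl) (simp add: Jmul)
  also have "\<dots> = (\<Sum>i<m. p i * q (i+m)) + (\<Sum>i<m. p (m+i) * (- q i))"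
    by (simp add: split2)
  also have "\<dots> = symp m p q"
    unfolding symp_def by (simp add: sum_subtractf add.commute sum_negf)
  finally show ?thesis by simp
qed

lemma symp_anti: "symp m p q = - symp m q p"
  unfolding symp_def by (simp add: sum_negf[symmetric] algebra_simps)

lemma symp_self: "symp m p p = 0"
  using symp_anti[of m p p] by simp

lemma symp_cong: "(\<And>i. i < 2*m \<Longrightarrow> p i = p' i) \<Longrightarrow> (\<And>i. i < 2*m \<Longrightarrow> q i = q' i) \<Longrightarrow> symp m p q = symp m p' q'"
  unfolding symp_def by (intro sum.cong refl) auto

lemma MJM_idx: assumes M: "M \<in> carrier_mat (2*m) (2*m)" and a: "a < 2*m" and b: "b < 2*m"
  shows "(transpose_mat M * Jm m * M) $$ (a,b) = symp m (\<lambda>i. M $$ (i,a)) (\<lambda>i. M $$ (i,b))"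
proof -
  have "(transpose_mat M * Jm m * M) $$ (a,b) = (\<Sum>q<2*m. M $$ (q,a) * (\<Sum>p<2*m. Jm m $$ (q,p) * M $$ (p,b)))"
    using M a b J_carrier[of m] by (simp add: scalar_prod_def atLeast0LessThan)
  also have "\<dots> = symp m (\<lambda>i. M $$ (i,a)) (\<lambda>i. M $$ (i,b))"
    by (simp add: symp_J)
  finally show ?thesis .
qed

lemma Tmv_idx: assumes M: "M \<in> carrier_mat (2*m) (2*m)" and u: "u \<in> carrier_vec (2*m)" and b: "b < 2*m"
  shows "(transpose_mat (Jm m * M) *\<^sub>v u) $ b = symp m (\<lambda>i. u $ i) (\<lambda>i. M $$ (i,b))"
proof -
  have "(transpose_mat (Jm m * M) *\<^sub>v u) $ b = (\<Sum>i<2*m. (\<Sum>r<2*m. Jm m $$ (i,r) * M $$ (r,b)) * u $ i)"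
    using M u b J_carrier[of m] by (simp add: scalar_prod_def atLeast0LessThan)
  also have "\<dots> = symp m (\<lambda>i. u $ i) (\<lambda>i. M $$ (i,b))"
    by (simp add: symp_J mult.commute)
  finally show ?thesis .
qed

lemma sc_J: assumes "1 \<le> j" "j \<le> 2*m" "1 \<le> k" "k \<le> 2*m"
  shows "ch_sc (Suc m) j k (2*m+1) = - Jm m $$ (j-1, k-1)"
  using assms unfolding sc_W by (auto simp: J_idx)

lemma Sp_symp: "(\<Sum>i<m. f (Suc m + i) * g (Suc i) - f (Suc i) * g (Suc m + i)) = - symp m (\<lambda>i. f (Suc i)) (\<lambda>i. g (Suc i))"
  unfolding symp_def by (simp add: sum_negf[symmetric] algebra_simps)


lemma sc_W2: "ch_sc (Suc m) j k (Suc (2*m)) =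
  (if j = 0 \<and> k = 2*m+1 then 1 else 0) - (if j = 2*m+1 \<and> k = 0 then 1 else 0)
  + (if m < j \<and> j \<le> 2*m \<and> k = j - m then 1 else 0) - (if m < k \<and> k \<le> 2*m \<and> j = k - m then 1 else 0)"
  using sc_W[of m j k] by simp

lemma Eq_iff: assumes j: "j < 2*m+2" and k: "k < 2*m+2" and l: "l < 2*m+2"
  shows "Eq m A j k l \<longleftrightarrow>
    (if j = 0 \<and> 1 \<le> k \<and> k \<le> 2*m then A $$ (l,k) / 2 else 0)
    + (if k = 0 \<and> 1 \<le> j \<and> j \<le> 2*m then - A $$ (l,j) / 2 else 0)
    + A $$ (l, 2*m+1) * ch_sc (Suc m) j k (2*m+1)
   = (if l = 0 then 0 else if l \<le> 2*m then (A $$ (0,j) * A $$ (l,k) - A $$ (l,j) * A $$ (0,k)) / 2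
      else A $$ (0,j) * A $$ (2*m+1,k) - A $$ (2*m+1,j) * A $$ (0,k)
        - symp m (\<lambda>i. A $$ (Suc i, j)) (\<lambda>i. A $$ (Suc i, k)))"
proof -
  have L: "(\<Sum>i<2*m+2. A $$ (l,i) * ch_sc (Suc m) j k i) =
    (if j = 0 \<and> 1 \<le> k \<and> k \<le> 2*m then A $$ (l,k) / 2 else 0)
    + (if k = 0 \<and> 1 \<le> j \<and> j \<le> 2*m then - A $$ (l,j) / 2 else 0)
    + A $$ (l, 2*m+1) * ch_sc (Suc m) j k (2*m+1)"
    using lhs_sum[OF j k, of "\<lambda>i. A $$ (l,i)"] by simp
  have R: "(\<Sum>p<2*m+2. \<Sum>q<2*m+2. A $$ (p,j) * A $$ (q,k) * ch_sc (Suc m) p q l) =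
    brc m (\<lambda>p. A $$ (p,j)) (\<lambda>q. A $$ (q,k)) l"
    using rhs_sum[OF l, of "\<lambda>p. A $$ (p,j)" "\<lambda>q. A $$ (q,k)"] by simp
  have S: "(\<Sum>i<m. A $$ (Suc m + i, j) * A $$ (Suc i, k) - A $$ (Suc i, j) * A $$ (Suc m + i, k))
     = - symp m (\<lambda>i. A $$ (Suc i, j)) (\<lambda>i. A $$ (Suc i, k))"
    by (rule Sp_symp)
  show ?thesis unfolding Eq_def L R brc_def S by simp
qed

lemma cls: fixes x m :: nat assumes "x < 2*m+2" obtains "x = 0" | "1 \<le> x" "x \<le> 2*m" | "x = 2*m+1"
  using assms by (cases "x = 0"; cases "x \<le> 2*m") auto

lemma blk_idx: assumes "i < 2*m+2" "j < 2*m+2"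
  shows "ch_block (Suc m) u M a v lam $$ (i,j) =
     (if i = 0 then (if j = 0 then 1 else 0)
     else if i \<le> 2*m then
       (if j = 0 then u $ (i-1) else if j \<le> 2*m then M $$ (i-1, j-1) else 0)
     else (if j = 0 then a else if j \<le> 2*m then v $ (j-1) else lam))"
  using assms unfolding ch_block_def by simp

lemma blk_carrier: "ch_block (Suc m) u M a v lam \<in> carrier_mat (2*m+2) (2*m+2)"
  unfolding ch_block_def by (rule carrier_matI) simp_all

lemma symp_zero1: "symp m (\<lambda>i. 0) q = 0" unfolding symp_def by simp
lemma symp_zero2: "symp m p (\<lambda>i. 0) = 0" unfolding symp_def by simp

lemma F2: assumes M: "M \<in> carrier_mat (2*m) (2*m)" and S: "transpose_mat M * Jm m * M = lam \<cdot>\<^sub>m Jm m"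
  and v: "v \<in> carrier_vec (2*m)" and lam: "lam \<noteq> 0" and b: "b < 2*m"
  shows "symp m (\<lambda>i. ((1 / (2*lam)) \<cdot>\<^sub>v (M *\<^sub>v (Jm m *\<^sub>v v))) $ i) (\<lambda>i. M $$ (i,b)) = v $ b / 2"
proof -
  let ?w = "M *\<^sub>v (Jm m *\<^sub>v v)"
  let ?u = "(1 / (2*lam)) \<cdot>\<^sub>v ?w"
  let ?T = "transpose_mat (Jm m * M)"
  have J: "Jm m \<in> carrier_mat (2*m) (2*m)" by (rule J_carrier)
  have Tc: "?T \<in> carrier_mat (2*m) (2*m)" using J M by simp
  have wc: "?w \<in> carrier_vec (2*m)" using J M v by simp
  have uc: "?u \<in> carrier_vec (2*m)" using wc by simp
  have e1: "?T *\<^sub>v ?u = (1 / (2*lam)) \<cdot>\<^sub>v (?T *\<^sub>v ?w)" by (rule mult_mat_vec[OF Tc wc])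
  have TMc: "?T * M \<in> carrier_mat (2*m) (2*m)" using Tc M by (rule mult_carrier_mat)
  have Jv: "Jm m *\<^sub>v v \<in> carrier_vec (2*m)" using J v by (rule mult_mat_vec_carrier)
  have e2a: "(?T * M * Jm m) *\<^sub>v v = (?T * M) *\<^sub>v (Jm m *\<^sub>v v)" by (rule assoc_mult_mat_vec[OF TMc J v])
  have e2b: "(?T * M) *\<^sub>v (Jm m *\<^sub>v v) = ?T *\<^sub>v ?w" by (rule assoc_mult_mat_vec[OF Tc M Jv])
  have e2: "?T *\<^sub>v ?w = (?T * M * Jm m) *\<^sub>v v" using e2a e2b by simp
  have T1: "?T = transpose_mat M * transpose_mat (Jm m)" by (rule transpose_mult[OF J M])
  have T2: "?T = - (transpose_mat M * Jm m)" unfolding T1 Jt using M J by simp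
  have e3a: "?T * M * Jm m = - (transpose_mat M * Jm m * M * Jm m)"
    unfolding T2 using M J by simp
  have e3b: "transpose_mat M * Jm m * M * Jm m = lam \<cdot>\<^sub>m (Jm m * Jm m)"
    unfolding S by (rule mult_smult_assoc_mat[OF J J])
  have e3: "?T * M * Jm m = lam \<cdot>\<^sub>m 1\<^sub>m (2*m)"
    unfolding e3a e3b JJ by (rule eq_matI) auto
  have e4: "((lam \<cdot>\<^sub>m 1\<^sub>m (2*m)) *\<^sub>v v) $ b = lam * v $ b"
  proof -
    have "((lam \<cdot>\<^sub>m 1\<^sub>m (2*m)) *\<^sub>v v) $ b = (\<Sum>i<2*m. (lam \<cdot>\<^sub>m 1\<^sub>m (2*m)) $$ (b,i) * v $ i)"
      by (rule mv_index[OF _ v b]) simp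
    also have "\<dots> = (\<Sum>i<2*m. if i = b then lam * v $ b else 0)"
      using b by (intro sum.cong refl) auto
    also have "\<dots> = lam * v $ b" using b by simp
    finally show ?thesis .
  qed
  have "symp m (\<lambda>i. ?u $ i) (\<lambda>i. M $$ (i,b)) = (?T *\<^sub>v ?u) $ b"
    by (rule Tmv_idx[OF M uc b, symmetric])
  also have "\<dots> = (1 / (2*lam)) * ((?T * M * Jm m) *\<^sub>v v) $ b"
    unfolding e1 e2 using b Tc M J by simp
  also have "\<dots> = v $ b / 2" unfolding e3 e4 using lam by simp
  finally show ?thesis .
qed


lemma block_Eq: assumes M: "M \<in> carrier_mat (2*m) (2*m)" and S: "transpose_mat M * Jm m * M = lam \<cdot>\<^sub>m Jm m"
  and v: "v \<in> carrier_vec (2*m)" and lam: "lam \<noteq> 0" and u: "u = (1 / (2*lam)) \<cdot>\<^sub>v (M *\<^sub>v (Jm m *\<^sub>v v))"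
  and j: "j < 2*m+2" and k: "k < 2*m+2" and l: "l < 2*m+2"
  shows "Eq m (ch_block (Suc m) u M a v lam) j k l"
proof -
  let ?A = "ch_block (Suc m) u M a v lam"
  define cf where "cf c = (\<lambda>i. if c = 0 then u $ i else if c \<le> 2*m then M $$ (i, c-1) else 0)" for c
  have cf0: "cf 0 = (\<lambda>i. u $ i)" unfolding cf_def by simp
  have cfm: "\<And>c. 1 \<le> c \<Longrightarrow> c \<le> 2*m \<Longrightarrow> cf c = (\<lambda>i. M $$ (i, c-1))" unfolding cf_def by auto
  have cfW: "cf (2*m+1) = (\<lambda>i. 0)" "cf (Suc (2*m)) = (\<lambda>i. 0)" unfolding cf_def by auto
  have SC: "symp m (\<lambda>i. ?A $$ (Suc i, j)) (\<lambda>i. ?A $$ (Suc i, k)) = symp m (cf j) (cf k)"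
    by (rule symp_cong) (use j k in \<open>auto simp: blk_idx cf_def\<close>)
  have F1: "\<And>a b. a < 2*m \<Longrightarrow> b < 2*m \<Longrightarrow> symp m (\<lambda>i. M $$ (i,a)) (\<lambda>i. M $$ (i,b)) = lam * Jm m $$ (a,b)"
  proof -
    fix a b assume a: "a < 2*m" and b: "b < 2*m"
    have "(transpose_mat M * Jm m * M) $$ (a,b) = (lam \<cdot>\<^sub>m Jm m) $$ (a,b)" by (simp only: S)
    then show "symp m (\<lambda>i. M $$ (i,a)) (\<lambda>i. M $$ (i,b)) = lam * Jm m $$ (a,b)"
      using MJM_idx[OF M a b] J_carrier[of m] a b by simp
  qed
  have F2': "\<And>b. b < 2*m \<Longrightarrow> symp m (\<lambda>i. u $ i) (\<lambda>i. M $$ (i,b)) = v $ b / 2"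
    using F2[OF M S v lam] u by simp
  have Sv: "symp m (cf j) (cf k) = (if j = 0 \<and> 1 \<le> k \<and> k \<le> 2*m then v $ (k-1) / 2
      else if k = 0 \<and> 1 \<le> j \<and> j \<le> 2*m then - v $ (j-1) / 2
      else if 1 \<le> j \<and> j \<le> 2*m \<and> 1 \<le> k \<and> k \<le> 2*m then - lam * ch_sc (Suc m) j k (2*m+1) else 0)"
  proof (cases rule: cls[OF j])
    case 1
    then show ?thesis
    proof (cases rule: cls[OF k])
      case 1 then show ?thesis using \<open>j = 0\<close> by (simp add: cf0 symp_self)
    next
      case 2 then show ?thesis using \<open>j = 0\<close> by (simp add: cf0 cfm F2')
    next
      case 3 then show ?thesis using \<open>j = 0\<close> by (simp add: cf0 cfW symp_zero2)
    qed
  next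
    case 2
    then show ?thesis
    proof (cases rule: cls[OF k])
      case 1
      have "symp m (cf j) (cf k) = - symp m (\<lambda>i. u $ i) (\<lambda>i. M $$ (i, j-1))"
        using 1 2 cf0 cfm[of j] symp_anti[of m "\<lambda>i. M $$ (i, j-1)" "\<lambda>i. u $ i"] by simp
      then show ?thesis using 1 2 F2'[of "j-1"] by simp
    next
      case 3 then show ?thesis using 2 by (simp add: cfm cfW symp_zero2)
    next
      case k2: 2
      have e: "ch_sc (Suc m) j k (Suc (2*m)) = - Jm m $$ (j-1,k-1)" using sc_J[of j m k] 2 k2 by simp
      then show ?thesis using 2 k2 by (simp add: cfm F1)
    qed
  next
    case 3 then show ?thesis by (simp add: cfW symp_zero1)
  qed
  show ?thesis unfolding Eq_iff[OF j k l] SC Sv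
    by (cases rule: cls[OF j]; cases rule: cls[OF k]; cases rule: cls[OF l]) (simp_all add: blk_idx sc_W2, auto)
qed


lemma split3: fixes f :: "nat \<Rightarrow> real"
  shows "(\<Sum>i<2*m+2. f i) = f 0 + (\<Sum>i<2*m. f (Suc i)) + f (2*m+1)"
proof -
  have e: "2*m+2 = Suc (Suc (2*m))" by simp
  show ?thesis unfolding e
    by (subst sum.lessThan_Suc, subst sum.lessThan_Suc_shift) simp
qed

lemma blk_inv: assumes M: "M \<in> carrier_mat (2*m) (2*m)" and Mi: "invertible_mat M" and lam: "lam \<noteq> 0"
  shows "invertible_mat (ch_block (Suc m) u M a v lam)"
proof -
  let ?A = "ch_block (Suc m) u M a v lam"
  have A: "?A \<in> carrier_mat (2*m+2) (2*m+2)" by (rule blk_carrier)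
  obtain L where L: "L \<in> carrier_mat (2*m) (2*m)" and LM: "L * M = 1\<^sub>m (2*m)"
    using inv_mat_obtain[OF M Mi] by blast
  have "det ?A \<noteq> 0"
  proof
    assume "det ?A = 0"
    then obtain x where x: "x \<in> carrier_vec (2*m+2)" and x0: "x \<noteq> 0\<^sub>v (2*m+2)" and Ax: "?A *\<^sub>v x = 0\<^sub>v (2*m+2)"
      using det_0_iff_vec_prod_zero[OF A] by blast
    have row: "\<And>r. r < 2*m+2 \<Longrightarrow> (\<Sum>i<2*m+2. ?A $$ (r,i) * x $ i) = 0"
    proof -
      fix r assume r: "r < 2*m+2"
      have "(?A *\<^sub>v x) $ r = (\<Sum>i<2*m+2. ?A $$ (r,i) * x $ i)" by (rule mv_index[OF A x r])
      then show "(\<Sum>i<2*m+2. ?A $$ (r,i) * x $ i) = 0" using Ax r by simp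
    qed
    have x0': "x $ 0 = 0"
      using row[of 0] by (simp only: split3) (simp add: blk_idx)
    let ?x' = "vec (2*m) (\<lambda>i. x $ Suc i)"
    have x'c: "?x' \<in> carrier_vec (2*m)" by simp
    have Mx: "M *\<^sub>v ?x' = 0\<^sub>v (2*m)"
    proof (rule eq_vecI)
      fix r assume "r < dim_vec (0\<^sub>v (2*m) :: real vec)"
      then have r: "r < 2*m" by simp
      have "(\<Sum>i<2*m+2. ?A $$ (Suc r,i) * x $ i) = 0" using row[of "Suc r"] r by simp
      moreover have "(\<Sum>i<2*m+2. ?A $$ (Suc r,i) * x $ i) = (\<Sum>i<2*m. M $$ (r,i) * x $ Suc i)"
      proof -
        have "(\<Sum>i<2*m. ?A $$ (Suc r, Suc i) * x $ Suc i) = (\<Sum>i<2*m. M $$ (r,i) * x $ Suc i)"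
          using r by (intro sum.cong refl) (simp add: blk_idx)
        moreover have "(\<Sum>i<2*m+2. ?A $$ (Suc r,i) * x $ i) = ?A $$ (Suc r,0) * x $ 0
           + (\<Sum>i<2*m. ?A $$ (Suc r, Suc i) * x $ Suc i) + ?A $$ (Suc r, 2*m+1) * x $ (2*m+1)"
          by (rule split3)
        moreover have "?A $$ (Suc r, 2*m+1) = 0" using r by (simp add: blk_idx)
        ultimately show ?thesis using x0' by simp
      qed
      moreover have "(M *\<^sub>v ?x') $ r = (\<Sum>i<2*m. M $$ (r,i) * ?x' $ i)" by (rule mv_index[OF M x'c r])
      moreover have "(\<Sum>i<2*m. M $$ (r,i) * ?x' $ i) = (\<Sum>i<2*m. M $$ (r,i) * x $ Suc i)"
        by (intro sum.cong refl) simp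
      ultimately show "(M *\<^sub>v ?x') $ r = 0\<^sub>v (2*m) $ r" using r by simp
    qed (use M in simp)
    have x'0: "?x' = 0\<^sub>v (2*m)"
    proof -
      have "?x' = (L * M) *\<^sub>v ?x'" using LM x'c by simp
      also have "\<dots> = L *\<^sub>v (M *\<^sub>v ?x')" by (rule assoc_mult_mat_vec[OF L M x'c])
      also have "\<dots> = 0\<^sub>v (2*m)" unfolding Mx
        by (rule eq_vecI) (use L in \<open>auto intro: scalar_prod_right_zero[of _ "2*m"]\<close>)
      finally show ?thesis .
    qed
    have xs: "\<And>i. i < 2*m \<Longrightarrow> x $ Suc i = 0"
    proof -
      fix i assume i: "i < 2*m"
      have "?x' $ i = 0" unfolding x'0 using i by simp
      then show "x $ Suc i = 0" using i by simp
    qed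
    have "(\<Sum>i<2*m+2. ?A $$ (2*m+1,i) * x $ i) = lam * x $ (2*m+1)"
    proof -
      have "(\<Sum>i<2*m. ?A $$ (2*m+1, Suc i) * x $ Suc i) = 0"
        using xs by (intro sum.neutral) simp
      moreover have "(\<Sum>i<2*m+2. ?A $$ (2*m+1,i) * x $ i) = ?A $$ (2*m+1,0) * x $ 0
           + (\<Sum>i<2*m. ?A $$ (2*m+1, Suc i) * x $ Suc i) + ?A $$ (2*m+1, 2*m+1) * x $ (2*m+1)"
        by (rule split3)
      moreover have "?A $$ (2*m+1, 2*m+1) = lam" by (simp add: blk_idx)
      ultimately show ?thesis using x0' by simp
    qed
    then have xW: "x $ (2*m+1) = 0" using row[of "2*m+1"] lam by simp
    have "x = 0\<^sub>v (2*m+2)"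
    proof (rule eq_vecI)
      fix i assume "i < dim_vec (0\<^sub>v (2*m+2) :: real vec)"
      then have i: "i < 2*m+2" by simp
      show "x $ i = 0\<^sub>v (2*m+2) $ i"
      proof (cases rule: cls[OF i])
        case 1 then show ?thesis using x0' by simp
      next
        case 2 then show ?thesis using xs[of "i-1"] by simp
      next
        case 3 then show ?thesis using xW by simp
      qed
    qed (use x in simp)
    then show False using x0 by simp
  qed
  then show ?thesis by (rule det_inv[OF A])
qed


lemma aut_block: assumes m1: "1 \<le> m" and A: "A \<in> carrier_mat (2*m+2) (2*m+2)" and inv: "invertible_mat A"
  and E: "\<forall>j<2*m+2. \<forall>k<2*m+2. \<forall>l<2*m+2. Eq m A j k l"
  shows "\<exists>u M a v lam. A = ch_block (Suc m) u M a v lam \<and> M \<in> carrier_mat (2*m) (2*m) \<and> invertible_mat M \<and>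
     transpose_mat M * Jm m * M = lam \<cdot>\<^sub>m Jm m \<and> v \<in> carrier_vec (2*m) \<and> lam \<noteq> 0 \<and>
     u = (1 / (2*lam)) \<cdot>\<^sub>v (M *\<^sub>v (Jm m *\<^sub>v v))"
proof -
  have I: "\<And>j k l. j < 2*m+2 \<Longrightarrow> k < 2*m+2 \<Longrightarrow> l < 2*m+2 \<Longrightarrow> Eq m A j k l" using E by blast
  have R0: "\<And>k. 1 \<le> k \<Longrightarrow> k \<le> 2*m \<Longrightarrow> A $$ (0,k) = 0"
  proof -
    fix k assume k1: "1 \<le> k" and k2: "k \<le> 2*m"
    have "Eq m A 0 k 0" using I k2 by simp
    then show "A $$ (0,k) = 0" using Eq_iff[of 0 m k 0 A] k1 k2 by (simp add: sc_W sc_W2)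
  qed
  have R0W: "A $$ (0, 2*m+1) = 0"
  proof -
    have "Eq m A 0 (2*m+1) 0" using I by simp
    then show ?thesis using Eq_iff[of 0 m "2*m+1" 0 A] by (simp add: sc_W sc_W2)
  qed
  have CW: "\<And>l. 1 \<le> l \<Longrightarrow> l \<le> 2*m \<Longrightarrow> A $$ (l, 2*m+1) = 0"
  proof -
    fix l assume l1: "1 \<le> l" and l2: "l \<le> 2*m"
    have "Eq m A (m+1) 1 l" using I l2 m1 by simp
    moreover have "A $$ (0, m+1) = 0" using R0 m1 by simp
    moreover have "A $$ (0, 1) = 0" using R0 m1 by simp
    ultimately show "A $$ (l, 2*m+1) = 0" using Eq_iff[of "m+1" m 1 l A] l1 l2 m1 by (simp add: sc_W sc_W2)
  qed
  obtain B where B: "B \<in> carrier_mat (2*m+2) (2*m+2)" and AB: "A * B = 1\<^sub>m (2*m+2)" and BA: "B * A = 1\<^sub>m (2*m+2)"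
    using inv_mat_obtain[OF A inv] by blast
  define lam where "lam = A $$ (2*m+1, 2*m+1)"
  have lam0: "lam \<noteq> 0"
  proof
    assume l0: "lam = 0"
    have "(B * A) $$ (2*m+1, 2*m+1) = (\<Sum>p<2*m+2. B $$ (2*m+1, p) * A $$ (p, 2*m+1))"
      using A B by (simp add: scalar_prod_def atLeast0LessThan)
    also have "\<dots> = B $$ (2*m+1, 0) * A $$ (0, 2*m+1) + (\<Sum>i<2*m. B $$ (2*m+1, Suc i) * A $$ (Suc i, 2*m+1))
       + B $$ (2*m+1, 2*m+1) * A $$ (2*m+1, 2*m+1)" by (rule split3)
    also have "(\<Sum>i<2*m. B $$ (2*m+1, Suc i) * A $$ (Suc i, 2*m+1)) = 0"
      using CW by (intro sum.neutral) simp
    finally have "(B * A) $$ (2*m+1, 2*m+1) = 0" using R0W l0 unfolding lam_def by simp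
    then show False using BA by simp
  qed
  have symW: "\<And>j. symp m (\<lambda>i. A $$ (Suc i, j)) (\<lambda>i. A $$ (Suc i, 2*m+1)) = 0"
  proof -
    fix j
    have "symp m (\<lambda>i. A $$ (Suc i, j)) (\<lambda>i. A $$ (Suc i, 2*m+1)) = symp m (\<lambda>i. A $$ (Suc i, j)) (\<lambda>i. 0)"
      by (rule symp_cong) (use CW in auto)
    then show "symp m (\<lambda>i. A $$ (Suc i, j)) (\<lambda>i. A $$ (Suc i, 2*m+1)) = 0" by (simp add: symp_zero2)
  qed
  have A00: "A $$ (0,0) = 1"
  proof -
    have "Eq m A 0 (2*m+1) (2*m+1)" using I by simp
    then have "lam = A $$ (0,0) * lam" using Eq_iff[of 0 m "2*m+1" "2*m+1" A] R0W symW[of 0]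
      unfolding lam_def by (simp add: sc_W sc_W2)
    then show ?thesis using lam0 by simp
  qed
  define u where "u = vec (2*m) (\<lambda>i. A $$ (Suc i, 0))"
  define M where "M = mat (2*m) (2*m) (\<lambda>(i,j). A $$ (Suc i, Suc j))"
  define v where "v = vec (2*m) (\<lambda>j. A $$ (2*m+1, Suc j))"
  define a where "a = A $$ (2*m+1, 0)"
  have Mc: "M \<in> carrier_mat (2*m) (2*m)" unfolding M_def by simp
  have vc: "v \<in> carrier_vec (2*m)" unfolding v_def by simp
  have uc: "u \<in> carrier_vec (2*m)" unfolding u_def by simp
  have J: "Jm m \<in> carrier_mat (2*m) (2*m)" by (rule J_carrier)
  have F2r: "\<And>b. b < 2*m \<Longrightarrow> symp m (\<lambda>i. u $ i) (\<lambda>i. M $$ (i,b)) = v $ b / 2"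
  proof -
    fix b assume b: "b < 2*m"
    have "Eq m A 0 (Suc b) (2*m+1)" using I b by simp
    moreover have sc0: "ch_sc (Suc m) 0 (Suc b) (Suc (2*m)) = 0" using b by (auto simp: sc_W2)
    ultimately have e: "A $$ (2*m+1, Suc b) / 2 = A $$ (2*m+1, Suc b) - symp m (\<lambda>i. A $$ (Suc i, 0)) (\<lambda>i. A $$ (Suc i, Suc b))"
      using Eq_iff[of 0 m "Suc b" "2*m+1" A] b A00 R0[of "Suc b"] by simp
    have "symp m (\<lambda>i. A $$ (Suc i, 0)) (\<lambda>i. A $$ (Suc i, Suc b)) = symp m (\<lambda>i. u $ i) (\<lambda>i. M $$ (i,b))"
      by (rule symp_cong) (use b in \<open>auto simp: u_def M_def\<close>)
    then show "symp m (\<lambda>i. u $ i) (\<lambda>i. M $$ (i,b)) = v $ b / 2" using e b unfolding v_def by simp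
  qed
  have F1r: "\<And>a b. a < 2*m \<Longrightarrow> b < 2*m \<Longrightarrow> symp m (\<lambda>i. M $$ (i,a)) (\<lambda>i. M $$ (i,b)) = lam * Jm m $$ (a,b)"
  proof -
    fix a b assume a: "a < 2*m" and b: "b < 2*m"
    have "Eq m A (Suc a) (Suc b) (2*m+1)" using I a b by simp
    moreover have "ch_sc (Suc m) (Suc a) (Suc b) (2*m+1) = - Jm m $$ (a, b)" using sc_J[of "Suc a" m "Suc b"] a b by simp
    ultimately have e: "lam * (- Jm m $$ (a, b)) = - symp m (\<lambda>i. A $$ (Suc i, Suc a)) (\<lambda>i. A $$ (Suc i, Suc b))"
      using Eq_iff[of "Suc a" m "Suc b" "2*m+1" A] a b R0[of "Suc a"] R0[of "Suc b"] unfolding lam_def by simp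
    have "symp m (\<lambda>i. A $$ (Suc i, Suc a)) (\<lambda>i. A $$ (Suc i, Suc b)) = symp m (\<lambda>i. M $$ (i,a)) (\<lambda>i. M $$ (i,b))"
      by (rule symp_cong) (use a b in \<open>auto simp: M_def\<close>)
    then show "symp m (\<lambda>i. M $$ (i,a)) (\<lambda>i. M $$ (i,b)) = lam * Jm m $$ (a,b)" using e by simp
  qed
  have S: "transpose_mat M * Jm m * M = lam \<cdot>\<^sub>m Jm m"
  proof (rule eq_matI)
    fix i j assume "i < dim_row (lam \<cdot>\<^sub>m Jm m)" "j < dim_col (lam \<cdot>\<^sub>m Jm m)"
    then have i: "i < 2*m" and j: "j < 2*m" using J by auto
    show "(transpose_mat M * Jm m * M) $$ (i, j) = (lam \<cdot>\<^sub>m Jm m) $$ (i, j)"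
      using MJM_idx[OF Mc i j] F1r[OF i j] i j J by simp
  qed (use Mc J in auto)
  define L where "L = (- 1 / lam) \<cdot>\<^sub>m (Jm m * transpose_mat M * Jm m)"
  have Lc: "L \<in> carrier_mat (2*m) (2*m)" unfolding L_def using J Mc by simp
  have LM: "L * M = 1\<^sub>m (2*m)"
  proof -
    have JMJc: "Jm m * transpose_mat M * Jm m \<in> carrier_mat (2*m) (2*m)" using J Mc by simp
    have "L * M = (- 1 / lam) \<cdot>\<^sub>m ((Jm m * transpose_mat M * Jm m) * M)"
      unfolding L_def by (rule mult_smult_assoc_mat[OF JMJc Mc])
    also have "(Jm m * transpose_mat M * Jm m) * M = Jm m * (transpose_mat M * Jm m * M)"
    proof -
      have Mt: "transpose_mat M \<in> carrier_mat (2*m) (2*m)" using Mc by simp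
      have c2: "transpose_mat M * Jm m \<in> carrier_mat (2*m) (2*m)" using Mt J by simp
      have "Jm m * transpose_mat M * Jm m = Jm m * (transpose_mat M * Jm m)" by (rule assoc_mult_mat[OF J Mt J])
      moreover have "(Jm m * (transpose_mat M * Jm m)) * M = Jm m * (transpose_mat M * Jm m * M)"
        by (rule assoc_mult_mat[OF J c2 Mc])
      ultimately show ?thesis by simp
    qed
    also have "\<dots> = lam \<cdot>\<^sub>m (Jm m * Jm m)" unfolding S by (rule mult_smult_distrib[OF J J])
    also have "(- 1 / lam) \<cdot>\<^sub>m (lam \<cdot>\<^sub>m (Jm m * Jm m)) = 1\<^sub>m (2*m)"
      unfolding JJ by (rule eq_matI) (use lam0 in auto)
    finally show ?thesis .
  qed
  have Minv: "invertible_mat M" by (rule inv_mat_intro[OF Mc Lc LM])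
  have MLr: "M * L = 1\<^sub>m (2*m)" by (rule mat_mult_left_right_inverse[OF Lc Mc LM])
  define u' where "u' = (1 / (2*lam)) \<cdot>\<^sub>v (M *\<^sub>v (Jm m *\<^sub>v v))"
  have u'c: "u' \<in> carrier_vec (2*m)" unfolding u'_def using Mc J vc by simp
  let ?T = "transpose_mat (Jm m * M)"
  have Tc: "?T \<in> carrier_mat (2*m) (2*m)" using J Mc by simp
  have Tu: "?T *\<^sub>v u = ?T *\<^sub>v u'"
  proof (rule eq_vecI)
    fix b assume "b < dim_vec (?T *\<^sub>v u')"
    then have b: "b < 2*m" using Tc Mc by simp
    have "(?T *\<^sub>v u) $ b = v $ b / 2" using Tmv_idx[OF Mc uc b] F2r[OF b] by simp
    moreover have "(?T *\<^sub>v u') $ b = v $ b / 2" using Tmv_idx[OF Mc u'c b] F2[OF Mc S vc lam0 b] unfolding u'_def by simp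
    ultimately show "(?T *\<^sub>v u) $ b = (?T *\<^sub>v u') $ b" by simp
  qed (use Tc in simp)
  define K where "K = Jm m * transpose_mat L"
  have Kc: "K \<in> carrier_mat (2*m) (2*m)" unfolding K_def using J Lc by simp
  have KT: "K * ?T = 1\<^sub>m (2*m)"
  proof -
    have T1: "?T = transpose_mat M * transpose_mat (Jm m)" by (rule transpose_mult[OF J Mc])
    have LtMt: "transpose_mat L * transpose_mat M = 1\<^sub>m (2*m)"
      using transpose_mult[OF Mc Lc] MLr by simp
    have "K * ?T = Jm m * (transpose_mat L * transpose_mat M) * transpose_mat (Jm m)"
    proof -
      have Lt: "transpose_mat L \<in> carrier_mat (2*m) (2*m)" using Lc by simp
      have Mt: "transpose_mat M \<in> carrier_mat (2*m) (2*m)" using Mc by simp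
      have Jtc: "transpose_mat (Jm m) \<in> carrier_mat (2*m) (2*m)" using J by simp
      have c1: "transpose_mat M * transpose_mat (Jm m) \<in> carrier_mat (2*m) (2*m)" using Mt Jtc by simp
      have c2: "transpose_mat L * transpose_mat M \<in> carrier_mat (2*m) (2*m)" using Lt Mt by simp
      have "Jm m * transpose_mat L * (transpose_mat M * transpose_mat (Jm m))
         = Jm m * (transpose_mat L * (transpose_mat M * transpose_mat (Jm m)))" by (rule assoc_mult_mat[OF J Lt c1])
      moreover have "Jm m * (transpose_mat L * transpose_mat M) * transpose_mat (Jm m)
         = Jm m * ((transpose_mat L * transpose_mat M) * transpose_mat (Jm m))" by (rule assoc_mult_mat[OF J c2 Jtc])
      moreover have "(transpose_mat L * transpose_mat M) * transpose_mat (Jm m)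
         = transpose_mat L * (transpose_mat M * transpose_mat (Jm m))" by (rule assoc_mult_mat[OF Lt Mt Jtc])
      ultimately show ?thesis unfolding K_def T1 by simp
    qed
    also have "\<dots> = Jm m * transpose_mat (Jm m)" unfolding LtMt using J by simp
    also have "\<dots> = 1\<^sub>m (2*m)" unfolding Jt using J JJ by simp
    finally show ?thesis .
  qed
  have uu': "u = u'"
  proof -
    have "u = (K * ?T) *\<^sub>v u" unfolding KT using uc by simp
    also have "\<dots> = K *\<^sub>v (?T *\<^sub>v u)" by (rule assoc_mult_mat_vec[OF Kc Tc uc])
    also have "\<dots> = K *\<^sub>v (?T *\<^sub>v u')" unfolding Tu ..
    also have "\<dots> = (K * ?T) *\<^sub>v u'" by (rule assoc_mult_mat_vec[OF Kc Tc u'c, symmetric])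
    also have "\<dots> = u'" unfolding KT using u'c by simp
    finally show ?thesis .
  qed
  have Ablk: "A = ch_block (Suc m) u M a v lam"
  proof (rule eq_matI)
    fix i j assume "i < dim_row (ch_block (Suc m) u M a v lam)" "j < dim_col (ch_block (Suc m) u M a v lam)"
    then have i: "i < 2*m+2" and j: "j < 2*m+2" using blk_carrier[of m u M a v lam] by auto
    show "A $$ (i,j) = ch_block (Suc m) u M a v lam $$ (i,j)"
      unfolding blk_idx[OF i j]
      by (cases rule: cls[OF i]; cases rule: cls[OF j])
         (use A00 R0 R0W CW in \<open>auto simp: u_def M_def v_def a_def lam_def\<close>)
  qed (use A blk_carrier[of m u M a v lam] in auto)
  show ?thesis
    using Ablk Mc Minv S vc lam0 uu' unfolding u'_def by blast
qed


theorem lemma2p1: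
  fixes n :: nat
  assumes "n \<ge> 2"
  shows "ch_Aut n =
    {ch_block n u M a v lam | u M a v lam.
       M \<in> carrier_mat (2*n-2) (2*n-2) \<and> invertible_mat M \<and>
       transpose_mat M * Jm (n-1) * M = lam \<cdot>\<^sub>m Jm (n-1) \<and>
       v \<in> carrier_vec (2*n-2) \<and> lam \<noteq> 0 \<and>
       u = (1 / (2*lam)) \<cdot>\<^sub>v (M *\<^sub>v (Jm (n-1) *\<^sub>v v))}"
proof -
  obtain m where n: "n = Suc m" and m1: "1 \<le> m" using assms by (cases n) auto
  have e1: "2*n = 2*m+2" using n by simp
  have e2: "2*n-2 = 2*m" using n by simp
  have e3: "n-1 = m" using n by simp
  have L: "ch_Aut n = {A. A \<in> carrier_mat (2*m+2) (2*m+2) \<and> invertible_mat A \<and>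
      (\<forall>x \<in> carrier_vec (2*m+2). \<forall>y \<in> carrier_vec (2*m+2).
         A *\<^sub>v ch_bracket (Suc m) x y = ch_bracket (Suc m) (A *\<^sub>v x) (A *\<^sub>v y))}"
    unfolding ch_Aut_def e1 unfolding n ..
  have R: "{ch_block n u M a v lam | u M a v lam.
       M \<in> carrier_mat (2*n-2) (2*n-2) \<and> invertible_mat M \<and>
       transpose_mat M * Jm (n-1) * M = lam \<cdot>\<^sub>m Jm (n-1) \<and>
       v \<in> carrier_vec (2*n-2) \<and> lam \<noteq> 0 \<and>
       u = (1 / (2*lam)) \<cdot>\<^sub>v (M *\<^sub>v (Jm (n-1) *\<^sub>v v))} =
     {ch_block (Suc m) u M a v lam | u M a v lam.
       M \<in> carrier_mat (2*m) (2*m) \<and> invertible_mat M \<and>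
       transpose_mat M * Jm m * M = lam \<cdot>\<^sub>m Jm m \<and>
       v \<in> carrier_vec (2*m) \<and> lam \<noteq> 0 \<and>
       u = (1 / (2*lam)) \<cdot>\<^sub>v (M *\<^sub>v (Jm m *\<^sub>v v))}"
    unfolding e2 e3 unfolding n ..
  show ?thesis unfolding L R
  proof (rule equalityI; rule subsetI)
    fix A assume "A \<in> {A. A \<in> carrier_mat (2*m+2) (2*m+2) \<and> invertible_mat A \<and>
      (\<forall>x \<in> carrier_vec (2*m+2). \<forall>y \<in> carrier_vec (2*m+2).
         A *\<^sub>v ch_bracket (Suc m) x y = ch_bracket (Suc m) (A *\<^sub>v x) (A *\<^sub>v y))}"
    then have A: "A \<in> carrier_mat (2*m+2) (2*m+2)" and inv: "invertible_mat A"
      and C: "\<forall>x \<in> carrier_vec (2*m+2). \<forall>y \<in> carrier_vec (2*m+2).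
         A *\<^sub>v ch_bracket (Suc m) x y = ch_bracket (Suc m) (A *\<^sub>v x) (A *\<^sub>v y)" by blast+
    have E: "\<forall>j<2*m+2. \<forall>k<2*m+2. \<forall>l<2*m+2. Eq m A j k l" using C aut_iff[OF A] by blast
    from aut_block[OF m1 A inv E] show "A \<in> {ch_block (Suc m) u M a v lam | u M a v lam.
       M \<in> carrier_mat (2*m) (2*m) \<and> invertible_mat M \<and>
       transpose_mat M * Jm m * M = lam \<cdot>\<^sub>m Jm m \<and>
       v \<in> carrier_vec (2*m) \<and> lam \<noteq> 0 \<and>
       u = (1 / (2*lam)) \<cdot>\<^sub>v (M *\<^sub>v (Jm m *\<^sub>v v))}" by blast
  next
    fix A assume "A \<in> {ch_block (Suc m) u M a v lam | u M a v lam.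
       M \<in> carrier_mat (2*m) (2*m) \<and> invertible_mat M \<and>
       transpose_mat M * Jm m * M = lam \<cdot>\<^sub>m Jm m \<and>
       v \<in> carrier_vec (2*m) \<and> lam \<noteq> 0 \<and>
       u = (1 / (2*lam)) \<cdot>\<^sub>v (M *\<^sub>v (Jm m *\<^sub>v v))}"
    then obtain u M a v lam where Adef: "A = ch_block (Suc m) u M a v lam"
      and M: "M \<in> carrier_mat (2*m) (2*m)" and Mi: "invertible_mat M"
      and S: "transpose_mat M * Jm m * M = lam \<cdot>\<^sub>m Jm m" and v: "v \<in> carrier_vec (2*m)"
      and lam: "lam \<noteq> 0" and u: "u = (1 / (2*lam)) \<cdot>\<^sub>v (M *\<^sub>v (Jm m *\<^sub>v v))" by blast
    have A: "A \<in> carrier_mat (2*m+2) (2*m+2)" unfolding Adef by (rule blk_carrier)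
    have inv: "invertible_mat A" unfolding Adef by (rule blk_inv[OF M Mi lam])
    have E: "\<forall>j<2*m+2. \<forall>k<2*m+2. \<forall>l<2*m+2. Eq m A j k l"
      unfolding Adef using block_Eq[OF M S v lam u] by blast
    have C: "\<forall>x \<in> carrier_vec (2*m+2). \<forall>y \<in> carrier_vec (2*m+2).
         A *\<^sub>v ch_bracket (Suc m) x y = ch_bracket (Suc m) (A *\<^sub>v x) (A *\<^sub>v y)"
      using E aut_iff[OF A] by blast
    show "A \<in> {A. A \<in> carrier_mat (2*m+2) (2*m+2) \<and> invertible_mat A \<and>
      (\<forall>x \<in> carrier_vec (2*m+2). \<forall>y \<in> carrier_vec (2*m+2).
         A *\<^sub>v ch_bracket (Suc m) x y = ch_bracket (Suc m) (A *\<^sub>v x) (A *\<^sub>v y))}"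
      using A inv C by blast
  qed
qed

end
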